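(* Let $d\ge2$, $k\in\mathbb{N}_0$, $Y_k$ a harmonic homogeneous polynomial of degree $k$ on $\mathbb{R}^d$, $\alpha\in\mathbb{R}$, and $H_{\alpha,k}(x)=|x|^{2\alpha}Y_k(x)$ on $\mathbb{R}^d\setminus\{0\}$. If $\alpha\in\mathbb{N}_0$ or $\alpha=1-\frac d2-k+j$ for some $j\in\mathbb{N}_0$, then $H_{\alpha,k}$ is polyharmonic of finite order (i.e. $\Delta^pH_{\alpha,k}=0$ for some $p$). If $\alpha$ is none of these numbers, then for $0<r_0<r_1\le\infty$ the restriction of $H_{\alpha,k}$ to $A(r_0,r_1)$ is polyharmonic of infinite order and type at most $1/r_0$.
   Context: $A(r_0,r_1)=\{x\in\mathbb{R}^d: r_0<|x|<r_1\}$. A function $f:G\to\mathbb{C}$ on a domain $G\subset\mathbb{R}^d$ is polyharmonic of infinite order and type $\tau\ge0$ if $f\in C^\infty(G)$ and for every compact $K\subset G$ and every $\varepsilon>0$ there is $C_{K,\varepsilon}>0$ with $\max_{x\in K}|\Delta^p f(x)|\le C_{K,\varepsilon}(2p)!(\tau+\varepsilon)^{2p}$ for all $p\in\mathbb{N}_0$. "Type at most $1/r_0$" means it is of type $1/r_0$ in this sense. *)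

theory Defs
  imports "HOL-Analysis.Analysis"
begin

definition partial_deriv :: "'n::finite \<Rightarrow> (real^'n \<Rightarrow> 'b::real_normed_vector) \<Rightarrow> real^'n \<Rightarrow> 'b" where
  "partial_deriv i f x = frechet_derivative f (at x) (axis i 1)"

definition laplacian :: "(real^'n::finite \<Rightarrow> 'b::real_normed_vector) \<Rightarrow> real^'n \<Rightarrow> 'b" where
  "laplacian f x = (\<Sum>i\<in>UNIV. partial_deriv i (partial_deriv i f) x)"

primrec Ck_on :: "nat \<Rightarrow> (real^'n::finite) set \<Rightarrow> (real^'n \<Rightarrow> 'b::real_normed_vector) \<Rightarrow> bool" where
  "Ck_on 0 G f = continuous_on G f"
| "Ck_on (Suc k) G f = ((\<forall>x\<in>G. f differentiable (at x)) \<and> continuous_on G f \<and>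
      (\<forall>i. Ck_on k G (partial_deriv i f)))"

definition smooth_on :: "(real^'n::finite) set \<Rightarrow> (real^'n \<Rightarrow> 'b::real_normed_vector) \<Rightarrow> bool" where
  "smooth_on G f = (\<forall>k. Ck_on k G f)"

definition homogeneous_poly :: "nat \<Rightarrow> (real^'n::finite \<Rightarrow> real) \<Rightarrow> bool" where
  "homogeneous_poly k Y = (\<exists>c :: ('n \<Rightarrow> nat) \<Rightarrow> real.
      \<forall>x. Y x = (\<Sum>a\<in>{a. sum a UNIV = k}. c a * (\<Prod>i\<in>UNIV. (x $ i) ^ a i)))"

definition harmonic_homogeneous_poly :: "nat \<Rightarrow> (real^'n::finite \<Rightarrow> real) \<Rightarrow> bool" where
  "harmonic_homogeneous_poly k Y = (homogeneous_poly k Y \<and> (\<forall>x. laplacian Y x = 0))"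

definition annulus :: "real \<Rightarrow> ereal \<Rightarrow> (real^'n::finite) set" where
  "annulus r0 r1 = {x. r0 < norm x \<and> ereal (norm x) < r1}"

definition polyharmonic_infinite_order_type ::
  "(real^'n::finite) set \<Rightarrow> real \<Rightarrow> (real^'n \<Rightarrow> complex) \<Rightarrow> bool" where
  "polyharmonic_infinite_order_type G \<tau> f =
     (smooth_on G f \<and>
      (\<forall>K \<epsilon>. compact K \<and> K \<subseteq> G \<and> \<epsilon> > 0 \<longrightarrow>
         (\<exists>C>0. \<forall>p::nat. \<forall>x\<in>K. norm ((laplacian ^^ p) f x) \<le> C * fact (2*p) * (\<tau> + \<epsilon>) ^ (2*p))))"

definition polyharmonic_finite_order :: "(real^'n::finite) set \<Rightarrow> (real^'n \<Rightarrow> complex) \<Rightarrow> bool" where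
  "polyharmonic_finite_order G f = (\<exists>p. \<forall>x\<in>G. (laplacian ^^ p) f x = 0)"

end

theory Submission
  imports Defs "HOL-Real_Asymp.Real_Asymp"
begin


lemma fd_local:
  assumes "open S" "x \<in> S" "\<And>y. y \<in> S \<Longrightarrow> f y = g y"
  shows "frechet_derivative f (at x) = frechet_derivative g (at x)"
proof -
  have "(f has_derivative f') (at x) \<longleftrightarrow> (g has_derivative f') (at x)" for f'
    using has_derivative_transform_within_open[OF _ assms(1,2), of f f' UNIV g]
          has_derivative_transform_within_open[OF _ assms(1,2), of g f' UNIV f] assms(3)
    by auto
  then show ?thesis unfolding frechet_derivative_def by simp
qed

lemma pd_local:
  assumes "open S" "x \<in> S" "\<And>y. y \<in> S \<Longrightarrow> f y = g y"
  shows "partial_deriv i f x = partial_deriv i g x"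
  unfolding partial_deriv_def using fd_local[OF assms] by simp

lemma lap_local:
  assumes "open S" "x \<in> S" "\<And>y. y \<in> S \<Longrightarrow> f y = g y"
  shows "laplacian f x = laplacian g x"
proof -
  have "partial_deriv i f y = partial_deriv i g y" if "y \<in> S" for i y
    using pd_local[OF assms(1) that assms(3)] .
  then show ?thesis unfolding laplacian_def
    using pd_local[OF assms(1,2)] by (metis (no_types, lifting))
qed

lemma pd_has:
  assumes "(f has_derivative f') (at x)"
  shows "partial_deriv i f x = f' (axis i 1)"
  unfolding partial_deriv_def using frechet_derivative_at[OF assms] by simp

lemma Ck_cong:
  assumes "open G" "\<And>y. y \<in> G \<Longrightarrow> f y = g y"
  shows "Ck_on k G f = Ck_on k G g"
  using assms(2)
proof (induction k arbitrary: f g)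
  case 0
  then show ?case using continuous_on_cong by auto
next
  case (Suc k)
  have d: "(f differentiable at x) = (g differentiable at x)" if "x \<in> G" for x
    using has_derivative_transform_within_open[OF _ assms(1) that, of f _ UNIV g]
          has_derivative_transform_within_open[OF _ assms(1) that, of g _ UNIV f] Suc.prems
    unfolding differentiable_def by metis
  have p: "Ck_on k G (partial_deriv i f) = Ck_on k G (partial_deriv i g)" for i
    by (rule Suc.IH) (rule pd_local[OF assms(1)], auto simp: Suc.prems)
  show ?case using d p continuous_on_cong[of G G f g] Suc.prems by auto
qed

lemma Ck_down: "Ck_on (Suc k) G f \<Longrightarrow> Ck_on k G f"
proof (induction k arbitrary: f)
  case 0 then show ?case by simp
next
  case (Suc k) then show ?case by (metis Ck_on.simps(2))
qed

lemma Ck_le: "Ck_on k G f \<Longrightarrow> m \<le> k \<Longrightarrow> Ck_on m G f"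
proof (induction k)
  case 0 then show ?case by simp
next
  case (Suc k) then show ?case using Ck_down by (metis le_Suc_eq)
qed

lemma Ck_subset: "Ck_on k G f \<Longrightarrow> G' \<subseteq> G \<Longrightarrow> Ck_on k G' f"
  by (induction k arbitrary: f) (auto intro: continuous_on_subset)

lemma Ck_const: "Ck_on k (G::(real^'n::finite) set) (\<lambda>x. c)"
proof (induction k arbitrary: c)
  case 0 then show ?case by simp
next
  case (Suc k)
  have "partial_deriv i (\<lambda>x::real^'n. c) = (\<lambda>x. 0)" for i
    unfolding partial_deriv_def by auto
  then show ?case using Suc by auto
qed



lemma Ck_add:
  assumes "open G"
  shows "Ck_on k G f \<Longrightarrow> Ck_on k G g \<Longrightarrow> Ck_on k G (\<lambda>x. f x + g x)"
proof (induction k arbitrary: f g)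
  case 0 then show ?case by (auto intro: continuous_on_add)
next
  case (Suc k)
  have pd: "partial_deriv i (\<lambda>x. f x + g x) y = partial_deriv i f y + partial_deriv i g y"
    if "y \<in> G" for i y
  proof -
    have "f differentiable at y" "g differentiable at y" using Suc.prems that by auto
    then have "((\<lambda>x. f x + g x) has_derivative (\<lambda>h. frechet_derivative f (at y) h + frechet_derivative g (at y) h)) (at y)"
      by (intro has_derivative_add) (auto simp: frechet_derivative_works)
    from pd_has[OF this, of i] show ?thesis by (simp add: partial_deriv_def)
  qed
  have "Ck_on k G (partial_deriv i (\<lambda>x. f x + g x))" for i
    using Ck_cong[OF assms pd[of _ i], where k=k] Suc by auto
  then show ?case using Suc.prems by (auto intro: continuous_on_add)
qed

lemma Ck_mult:
  fixes f g :: "real^'n::finite \<Rightarrow> real"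
  assumes "open G"
  shows "Ck_on k G f \<Longrightarrow> Ck_on k G g \<Longrightarrow> Ck_on k G (\<lambda>x. f x * g x)"
proof (induction k arbitrary: f g)
  case 0 then show ?case by (auto intro: continuous_on_mult)
next
  case (Suc k)
  have pd: "partial_deriv i (\<lambda>x. f x * g x) y = f y * partial_deriv i g y + partial_deriv i f y * g y"
    if "y \<in> G" for i y
  proof -
    have "f differentiable at y" "g differentiable at y" using Suc.prems that by auto
    then have "((\<lambda>x. f x * g x) has_derivative (\<lambda>h. f y * frechet_derivative g (at y) h + frechet_derivative f (at y) h * g y)) (at y)"
      by (intro has_derivative_mult) (auto simp: frechet_derivative_works)
    from pd_has[OF this, of i] show ?thesis by (simp add: partial_deriv_def)
  qed
  have "Ck_on k G (partial_deriv i (\<lambda>x. f x * g x))" for i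
  proof -
    have "Ck_on k G (\<lambda>y. f y * partial_deriv i g y + partial_deriv i f y * g y)"
      using Suc.prems Ck_down[of k G f] Ck_down[of k G g] by (intro Ck_add[OF assms] Suc.IH) auto
    then show ?thesis using Ck_cong[OF assms pd[of _ i], where k=k] by auto
  qed
  then show ?case using Suc.prems by (auto intro: continuous_on_mult)
qed

lemma Ck_sum:
  fixes f :: "'a \<Rightarrow> real^'n::finite \<Rightarrow> real"
  assumes "open G" "\<And>a. a \<in> S \<Longrightarrow> Ck_on k G (f a)"
  shows "Ck_on k G (\<lambda>x. \<Sum>a\<in>S. f a x)"
proof (cases "finite S")
  case True
  then show ?thesis using assms(2)
    by (induction S rule: finite_induct) (auto intro: Ck_add[OF assms(1)] simp: Ck_const)
next
  case False then show ?thesis by (simp add: Ck_const)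
qed

lemma Ck_prod:
  fixes f :: "'a \<Rightarrow> real^'n::finite \<Rightarrow> real"
  assumes "open G" "\<And>a. a \<in> S \<Longrightarrow> Ck_on k G (f a)"
  shows "Ck_on k G (\<lambda>x. \<Prod>a\<in>S. f a x)"
proof (cases "finite S")
  case True
  then show ?thesis using assms(2)
    by (induction S rule: finite_induct) (auto intro: Ck_mult[OF assms(1)] simp: Ck_const)
next
  case False then show ?thesis by (simp add: Ck_const)
qed

lemma Ck_power:
  fixes f :: "real^'n::finite \<Rightarrow> real"
  assumes "open G" "Ck_on k G f"
  shows "Ck_on k G (\<lambda>x. f x ^ m)"
  by (induction m) (auto intro: Ck_mult[OF assms(1)] assms(2) simp: Ck_const)

lemma Ck_coord:
  "Ck_on k (G::(real^'n::finite) set) (\<lambda>x. x $ j)"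
proof (cases k)
  case 0 then show ?thesis by (simp add: continuous_on_component continuous_on_id)
next
  case (Suc m)
  have h: "((\<lambda>x::real^'n. x $ j) has_derivative (\<lambda>h. h $ j)) (at y)" for y
    by (rule bounded_linear.has_derivative[OF bounded_linear_vec_nth has_derivative_ident])
  have "partial_deriv i (\<lambda>x::real^'n. x $ j) = (\<lambda>x. if i = j then 1 else 0)" for i
    using pd_has[OF h] by (auto simp: axis_def)
  then show ?thesis using Suc h by (auto simp: Ck_const differentiable_def continuous_on_component continuous_on_id)
qed

lemma Ck_of_real:
  assumes "open G"
  shows "Ck_on k G f \<Longrightarrow> Ck_on k G (\<lambda>x. complex_of_real (f x))"
proof (induction k arbitrary: f)
  case 0 then show ?case by (auto intro: continuous_on_of_real)
next
  case (Suc k)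
  have pd: "partial_deriv i (\<lambda>x. complex_of_real (f x)) y = complex_of_real (partial_deriv i f y)"
    if "y \<in> G" for i y
  proof -
    have "f differentiable at y" using Suc.prems that by auto
    then have "((\<lambda>x. complex_of_real (f x)) has_derivative (\<lambda>h. of_real (frechet_derivative f (at y) h))) (at y)"
      by (intro bounded_linear.has_derivative[OF bounded_linear_of_real]) (auto simp: frechet_derivative_works)
    from pd_has[OF this, of i] show ?thesis by (simp add: partial_deriv_def)
  qed
  have "Ck_on k G (partial_deriv i (\<lambda>x. complex_of_real (f x)))" for i
    using Ck_cong[OF assms pd[of _ i], where k=k] Suc by auto
  moreover have "(\<lambda>x. complex_of_real (f x)) differentiable at y" if "y \<in> G" for y
  proof -
    have "f differentiable at y" using Suc.prems that by auto
    then obtain D where "(f has_derivative D) (at y)"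
      unfolding differentiable_def by blast
    from bounded_linear.has_derivative[OF bounded_linear_of_real this] show ?thesis
      unfolding differentiable_def by blast
  qed
  ultimately show ?case using Suc.prems by (auto intro: continuous_on_of_real)
qed



lemma norm_powr_deriv:
  fixes x :: "real^'n::finite"
  assumes "x \<noteq> 0"
  shows "((\<lambda>y. norm y powr g) has_derivative (\<lambda>h. g * norm x powr (g - 2) * (x \<bullet> h))) (at x)"
proof -
  have n: "(norm has_derivative (\<lambda>h. h \<bullet> sgn x)) (at x)"
    using has_derivative_norm[OF assms] by simp
  have "((\<lambda>y. norm y powr g) has_derivative (\<lambda>h. (norm x powr g) * (0 * ln (norm x) + h \<bullet> sgn x * g / norm x))) (at x)"
    using has_derivative_powr[OF n has_derivative_const[of g]] assms by simp
  moreover have "(norm x powr g) * (0 * ln (norm x) + h \<bullet> sgn x * g / norm x) = g * norm x powr (g - 2) * (x \<bullet> h)" for h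
  proof -
    have nx: "norm x > 0" using assms by simp
    have "norm x powr g = norm x powr (g - 2) * norm x ^ 2"
      using nx by (simp add: powr_diff powr_realpow)
    then show ?thesis using nx
      by (simp add: sgn_div_norm inner_commute field_simps power2_eq_square)
  qed
  ultimately show ?thesis by simp
qed

lemma pd_norm_powr:
  fixes x :: "real^'n::finite"
  assumes "x \<noteq> 0"
  shows "partial_deriv i (\<lambda>y. norm y powr g) x = g * norm x powr (g - 2) * x $ i"
  using pd_has[OF norm_powr_deriv[OF assms]] by (simp add: inner_axis)

lemma Ck_norm_powr:
  "Ck_on k (- {0::real^'n::finite}) (\<lambda>y. norm y powr g)"
proof (induction k arbitrary: g)
  case 0
  show ?case by (auto intro!: continuous_intros)
next
  case (Suc k)
  have "Ck_on k (- {0}) (partial_deriv i (\<lambda>y::real^'n. norm y powr g))" for i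
  proof -
    have "Ck_on k (- {0}) (\<lambda>y::real^'n. g * norm y powr (g - 2) * y $ i)"
      by (intro Ck_mult Ck_const Ck_coord Suc.IH) auto
    then show ?thesis
      using Ck_cong[of "- {0}" "partial_deriv i (\<lambda>y::real^'n. norm y powr g)"
                        "\<lambda>y. g * norm y powr (g - 2) * y $ i" k] pd_norm_powr by auto
  qed
  moreover have "(\<lambda>y::real^'n. norm y powr g) differentiable at x" if "x \<noteq> 0" for x
    using norm_powr_deriv[OF that] unfolding differentiable_def by blast
  ultimately show ?case by (auto intro!: continuous_intros)
qed

lemma Ck_homog:
  fixes Y :: "real^'n::finite \<Rightarrow> real"
  assumes "homogeneous_poly m Y"
  shows "Ck_on k UNIV Y"
proof -
  obtain c where c: "\<And>x. Y x = (\<Sum>a\<in>{a. sum a UNIV = m}. c a * (\<Prod>i\<in>UNIV. (x $ i) ^ a i))"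
    using assms unfolding homogeneous_poly_def by blast
  have "Ck_on k UNIV (\<lambda>x::real^'n. \<Sum>a\<in>{a. sum a UNIV = m}. c a * (\<Prod>i\<in>UNIV. (x $ i) ^ a i))"
    by (intro Ck_sum Ck_mult Ck_const Ck_prod Ck_power Ck_coord) auto
  moreover have "Y = (\<lambda>x. \<Sum>a\<in>{a. sum a UNIV = m}. c a * (\<Prod>i\<in>UNIV. (x $ i) ^ a i))"
    using c by auto
  ultimately show ?thesis by simp
qed

lemma homog_scale:
  fixes Y :: "real^'n::finite \<Rightarrow> real"
  assumes "homogeneous_poly m Y"
  shows "Y (t *\<^sub>R x) = t ^ m * Y x"
proof -
  obtain c where c: "\<And>x. Y x = (\<Sum>a\<in>{a. sum a UNIV = m}. c a * (\<Prod>i\<in>UNIV. (x $ i) ^ a i))"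
    using assms unfolding homogeneous_poly_def by blast
  have "(\<Prod>i\<in>UNIV. ((t *\<^sub>R x) $ i) ^ a i) = t ^ m * (\<Prod>i\<in>UNIV. (x $ i) ^ a i)"
    if "sum a UNIV = m" for a :: "'n \<Rightarrow> nat"
  proof -
    have "(\<Prod>i\<in>UNIV. ((t *\<^sub>R x) $ i) ^ a i) = (\<Prod>i\<in>UNIV. t ^ a i * (x $ i) ^ a i)"
      by (simp add: power_mult_distrib)
    also have "\<dots> = (\<Prod>i\<in>UNIV. t ^ a i) * (\<Prod>i\<in>UNIV. (x $ i) ^ a i)"
      by (simp add: prod.distrib)
    also have "(\<Prod>i\<in>UNIV. t ^ a i) = t ^ m" using that power_sum[of t a UNIV] by simp
    finally show ?thesis .
  qed
  then show ?thesis unfolding c by (simp add: sum_distrib_left algebra_simps)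
qed



lemma euler:
  fixes Y :: "real^'n::finite \<Rightarrow> real"
  assumes "homogeneous_poly m Y"
  shows "(\<Sum>i\<in>UNIV. x $ i * partial_deriv i Y x) = real m * Y x"
proof -
  define D where "D = frechet_derivative Y (at x)"
  have YD: "(Y has_derivative D) (at x)"
    using Ck_homog[OF assms, of 1] unfolding D_def by (simp add: frechet_derivative_works)
  have lin: "linear D" using YD has_derivative_linear by blast
  have sx: "((\<lambda>t::real. t *\<^sub>R x) has_derivative (\<lambda>h. h *\<^sub>R x)) (at 1)"
    using has_derivative_scaleR_left[OF has_derivative_ident, of x "at 1"] by simp
  have "((\<lambda>t. Y (t *\<^sub>R x)) has_derivative (\<lambda>h. D (h *\<^sub>R x))) (at 1)"
    using has_derivative_compose[OF sx] YD by simp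
  moreover have "(\<lambda>h. D (h *\<^sub>R x)) = (*) (D x)"
    using linear_cmul[OF lin] by (auto simp: mult.commute)
  ultimately have d1: "((\<lambda>t. Y (t *\<^sub>R x)) has_field_derivative D x) (at 1)"
    by (simp add: has_field_derivative_def)
  have "(\<lambda>t. Y (t *\<^sub>R x)) = (\<lambda>t. t ^ m * Y x)"
    using homog_scale[OF assms] by auto
  moreover have "((\<lambda>t::real. t ^ m) has_field_derivative real m) (at 1)"
    using DERIV_pow[of m "1::real"] by simp
  then have "((\<lambda>t::real. t ^ m * Y x) has_field_derivative (real m * Y x)) (at 1)"
    by (rule DERIV_cmult_right)
  ultimately have d2: "((\<lambda>t. Y (t *\<^sub>R x)) has_field_derivative real m * Y x) (at 1)" by metis
  have eq: "D x = real m * Y x" using DERIV_unique[OF d1 d2] .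
  have "D x = D (\<Sum>i\<in>UNIV. x $ i *\<^sub>R axis i 1)"
    using basis_expansion[of x] by (simp add: scalar_mult_eq_scaleR)
  also have "\<dots> = (\<Sum>i\<in>UNIV. x $ i * D (axis i 1))"
    by (simp add: linear_sum[OF lin] linear_cmul[OF lin])
  also have "\<dots> = (\<Sum>i\<in>UNIV. x $ i * partial_deriv i Y x)"
    by (simp add: D_def partial_deriv_def)
  finally show ?thesis using eq by simp
qed



lemma lap_formula:
  fixes Y :: "real^'n::finite \<Rightarrow> real"
  assumes hY: "harmonic_homogeneous_poly m Y" and x: "x \<noteq> 0"
  shows "laplacian (\<lambda>y. c * norm y powr g * Y y) x
       = c * g * (g - 2 + real CARD('n) + 2 * real m) * norm x powr (g - 2) * Y x"
proof -
  have hp: "homogeneous_poly m Y" and lapY: "\<And>x. laplacian Y x = 0"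
    using hY unfolding harmonic_homogeneous_poly_def by auto
  have C2: "Ck_on 2 UNIV Y" by (rule Ck_homog[OF hp])
  have Ydiff: "Y differentiable at y" for y using C2 by (simp add: numeral_2_eq_2)
  have Didiff: "partial_deriv i Y differentiable at y" for i y
    using C2 by (simp add: numeral_2_eq_2)
  define P where "P i y = c * (g * norm y powr (g - 2) * y $ i * Y y + norm y powr g * partial_deriv i Y y)" for i y
  have hcoord: "((\<lambda>y::real^'n. y $ i) has_derivative (\<lambda>h. h $ i)) (at y)" for i y
    by (rule bounded_linear.has_derivative[OF bounded_linear_vec_nth has_derivative_ident])
  have pd1: "partial_deriv i (\<lambda>y. c * norm y powr g * Y y) y = P i y" if "y \<noteq> 0" for i y
  proof -
    note h = has_derivative_mult[OF has_derivative_mult[OF has_derivative_const[of c] norm_powr_deriv[OF that, of g]]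
               Ydiff[of y, unfolded frechet_derivative_works]]
    show ?thesis unfolding pd_has[OF h, of i]
      by (simp add: P_def inner_axis partial_deriv_def[symmetric] algebra_simps)
  qed
  have pd2: "partial_deriv i (P i) x =
      c * (g * ((g - 2) * norm x powr (g - 4) * x $ i) * x $ i * Y x + g * norm x powr (g - 2) * Y x
         + 2 * g * norm x powr (g - 2) * x $ i * partial_deriv i Y x
         + norm x powr g * partial_deriv i (partial_deriv i Y) x)" for i
  proof -
    note t1 = has_derivative_mult[OF has_derivative_mult[OF has_derivative_mult[OF has_derivative_const[of g]
                norm_powr_deriv[OF x, of "g - 2"]] hcoord[of i]] Ydiff[of x, unfolded frechet_derivative_works]]
    note t2 = has_derivative_mult[OF norm_powr_deriv[OF x, of g] Didiff[of i x, unfolded frechet_derivative_works]]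
    note h = has_derivative_mult[OF has_derivative_const[of c] has_derivative_add[OF t1 t2]]
    have eqP: "P i = (\<lambda>y. c * (g * norm y powr (g - 2) * y $ i * Y y + norm y powr g * partial_deriv i Y y))"
      by (simp add: P_def fun_eq_iff)
    show ?thesis unfolding eqP pd_has[OF h, of i]
      by (simp add: inner_axis partial_deriv_def[symmetric] algebra_simps)
  qed
  have "laplacian (\<lambda>y. c * norm y powr g * Y y) x = (\<Sum>i\<in>UNIV. partial_deriv i (P i) x)"
    unfolding laplacian_def
    by (intro sum.cong refl pd_local[of "- {0}"]) (auto simp: x pd1)
  also have "\<dots> = (\<Sum>i\<in>UNIV.
        (c * g * (g - 2) * norm x powr (g - 4) * Y x) * (x $ i * x $ i) + c * g * norm x powr (g - 2) * Y x
         + (2 * c * g * norm x powr (g - 2)) * (x $ i * partial_deriv i Y x)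
         + (c * norm x powr g) * partial_deriv i (partial_deriv i Y) x)"
    by (intro sum.cong refl) (simp add: pd2 algebra_simps)
  also have "\<dots> = (c * g * (g - 2) * norm x powr (g - 4) * Y x) * (\<Sum>i\<in>UNIV. x $ i * x $ i)
        + real CARD('n) * (c * g * norm x powr (g - 2) * Y x)
        + (2 * c * g * norm x powr (g - 2)) * (\<Sum>i\<in>UNIV. x $ i * partial_deriv i Y x)
        + (c * norm x powr g) * laplacian Y x"
    by (simp add: sum.distrib sum_distrib_left laplacian_def)
  also have "(\<Sum>i\<in>UNIV. x $ i * x $ i) = norm x ^ 2"
    by (simp add: power2_norm_eq_inner inner_vec_def)
  also have "(\<Sum>i\<in>UNIV. x $ i * partial_deriv i Y x) = real m * Y x" by (rule euler[OF hp])
  also have "laplacian Y x = 0" by (rule lapY)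
  also have "norm x powr (g - 4) * norm x ^ 2 = norm x powr (g - 2)"
  proof -
    have nx: "norm x > 0" using x by simp
    have "norm x powr (g - 4) * norm x ^ 2 = norm x powr (g - 4) * norm x powr 2"
      using nx by (simp add: powr_numeral)
    also have "\<dots> = norm x powr (g - 4 + 2)" by (rule powr_add[symmetric])
    also have "g - 4 + 2 = g - 2" by simp
    finally show ?thesis .
  qed
  then have "c * g * (g - 2) * norm x powr (g - 4) * Y x * norm x ^ 2 = c * g * (g - 2) * norm x powr (g - 2) * Y x"
    by (metis mult.assoc mult.commute)
  finally show ?thesis by (simp add: algebra_simps)
qed



lemma pd_of_real:
  assumes "f differentiable at y"
  shows "partial_deriv i (\<lambda>x. complex_of_real (f x)) y = complex_of_real (partial_deriv i f y)"
proof -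
  have "((\<lambda>x. complex_of_real (f x)) has_derivative (\<lambda>h. of_real (frechet_derivative f (at y) h))) (at y)"
    using assms by (intro bounded_linear.has_derivative[OF bounded_linear_of_real]) (auto simp: frechet_derivative_works)
  from pd_has[OF this, of i] show ?thesis by (simp add: partial_deriv_def)
qed

lemma lap_of_real:
  assumes "open G" "x \<in> G" "\<And>y. y \<in> G \<Longrightarrow> f differentiable at y"
    "\<And>y i. y \<in> G \<Longrightarrow> partial_deriv i f differentiable at y"
  shows "laplacian (\<lambda>y. complex_of_real (f y)) x = complex_of_real (laplacian f x)"
proof -
  have "partial_deriv i (partial_deriv i (\<lambda>y. complex_of_real (f y))) x
      = partial_deriv i (\<lambda>y. complex_of_real (partial_deriv i f y)) x" for i
    by (rule pd_local[OF assms(1,2)]) (simp add: pd_of_real assms(3))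
  also have "\<dots> i = complex_of_real (partial_deriv i (partial_deriv i f) x)" for i
    by (simp add: pd_of_real assms(2,4))
  finally show ?thesis unfolding laplacian_def by simp
qed

lemma Ck_F:
  fixes Y :: "real^'n::finite \<Rightarrow> real"
  assumes "homogeneous_poly m Y"
  shows "Ck_on k (- {0}) (\<lambda>y. c * norm y powr g * Y y)"
  using Ck_subset[OF Ck_homog[OF assms, of k], of "- {0}"]
  by (intro Ck_mult Ck_const Ck_norm_powr) auto

lemma iter_formula:
  fixes Y :: "real^'n::finite \<Rightarrow> real" and \<alpha> :: real
  assumes hY: "harmonic_homogeneous_poly m Y"
  defines "H \<equiv> (\<lambda>x. complex_of_real (norm x powr (2 * \<alpha>) * Y x))"
  shows "x \<noteq> 0 \<Longrightarrow> (laplacian ^^ p) H x = complex_of_real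
     ((\<Prod>i<p. (2*\<alpha> - 2 * real i) * (2*\<alpha> - 2 * real i - 2 + real CARD('n) + 2 * real m))
       * norm x powr (2 * \<alpha> - 2 * real p) * Y x)"
proof (induction p arbitrary: x)
  case 0 then show ?case by (simp add: H_def)
next
  case (Suc p)
  have hp: "homogeneous_poly m Y" using hY by (simp add: harmonic_homogeneous_poly_def)
  define cp where "cp = (\<Prod>i<p. (2*\<alpha> - 2 * real i) * (2*\<alpha> - 2 * real i - 2 + real CARD('n) + 2 * real m))"
  define g where "g = 2 * \<alpha> - 2 * real p"
  have C2: "Ck_on 2 (- {0}) (\<lambda>y. cp * norm y powr g * Y y)" by (rule Ck_F[OF hp])
  have "(laplacian ^^ Suc p) H x = laplacian ((laplacian ^^ p) H) x" by simp
  also have "\<dots> = laplacian (\<lambda>y. complex_of_real (cp * norm y powr g * Y y)) x"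
    by (rule lap_local[of "- {0}"]) (auto simp: Suc.IH Suc.prems cp_def g_def)
  also have "\<dots> = complex_of_real (laplacian (\<lambda>y. cp * norm y powr g * Y y) x)"
    by (rule lap_of_real[of "- {0}"]) (use C2 Suc.prems in \<open>auto simp: numeral_2_eq_2\<close>)
  also have "\<dots> = complex_of_real (cp * g * (g - 2 + real CARD('n) + 2 * real m) * norm x powr (g - 2) * Y x)"
    by (simp add: lap_formula[OF hY Suc.prems])
  finally show ?case by (simp add: cp_def g_def algebra_simps)
qed



lemma fact_double: "fact (2 * p) = (\<Prod>i<p. (2 * real i + 1) * (2 * real i + 2))"
proof (induction p)
  case 0 then show ?case by simp
next
  case (Suc p)
  have "fact (2 * Suc p) = (fact (2 * p) :: real) * (2 * real p + 1) * (2 * real p + 2)"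
    by (simp add: algebra_simps)
  then show ?case using Suc by simp
qed

lemma prod_bound_eventually:
  fixes s :: "nat \<Rightarrow> real"
  assumes "\<And>i. 0 \<le> s i" "\<And>i. i \<ge> i0 \<Longrightarrow> s i \<le> 1"
  shows "(\<Prod>i<p. s i) \<le> (\<Prod>i<i0. max 1 (s i))"
proof -
  have "(\<Prod>i<p. s i) \<le> (\<Prod>i<min p i0. max 1 (s i))"
  proof (induction p)
    case 0 then show ?case by simp
  next
    case (Suc p)
    show ?case
    proof (cases "p < i0")
      case True
      then have m: "min (Suc p) i0 = Suc (min p i0)" by simp
      have "(\<Prod>i<Suc p. s i) = (\<Prod>i<p. s i) * s p" by simp
      also have "\<dots> \<le> (\<Prod>i<min p i0. max 1 (s i)) * max 1 (s p)"
        by (intro mult_mono Suc.IH) (auto simp: assms prod_nonneg)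
      also have "\<dots> = (\<Prod>i<min (Suc p) i0. max 1 (s i))" using True m by simp
      finally show ?thesis .
    next
      case False
      have "(\<Prod>i<Suc p. s i) = (\<Prod>i<p. s i) * s p" by simp
      also have "\<dots> \<le> (\<Prod>i<p. s i) * 1"
        using False assms by (intro mult_left_mono) (auto simp: prod_nonneg)
      also have "\<dots> \<le> (\<Prod>i<min p i0. max 1 (s i))" using Suc.IH by simp
      also have "min p i0 = min (Suc p) i0" using False by simp
      finally show ?thesis .
    qed
  qed
  also have "\<dots> \<le> (\<Prod>i<i0. max 1 (s i))"
  proof -
    have "(\<Prod>i<i0. max 1 (s i)) = (\<Prod>i<min p i0. max 1 (s i)) * (\<Prod>i\<in>{min p i0..<i0}. max 1 (s i))"
      by (metis prod.atLeastLessThan_concat lessThan_atLeast0 min.cobounded2 zero_le)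
    moreover have "1 \<le> (\<Prod>i\<in>{min p i0..<i0}. max 1 (s i))"
      by (intro prod_ge_1) auto
    moreover have "0 \<le> (\<Prod>i<min p i0. max 1 (s i))" by (intro prod_nonneg) auto
    ultimately show ?thesis
      using mult_left_mono[of 1 "\<Prod>i\<in>{min p i0..<i0}. max 1 (s i)" "\<Prod>i<min p i0. max 1 (s i)"] by simp
  qed
  finally show ?thesis .
qed

lemma growth:
  fixes a b q :: real
  assumes "0 \<le> a" "0 \<le> b" "1 < q"
  shows "\<exists>B>0. \<forall>p. (\<Prod>i<p. (2*a + 2 * real i) * (2*b + 2 * real i)) \<le> B * fact (2 * p) * q ^ (2 * p)"
proof -
  define r where "r i = (2*a + 2 * real i) * (2*b + 2 * real i) / ((2 * real i + 1) * (2 * real i + 2))" for i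
  have "r \<longlonglongrightarrow> 1" unfolding r_def by real_asymp
  moreover have "1 < q ^ 2" using assms(3) by (simp add: one_less_power)
  ultimately have "eventually (\<lambda>i. r i < q ^ 2) sequentially" by (rule order_tendstoD)
  then obtain i0 where i0: "\<And>i. i \<ge> i0 \<Longrightarrow> r i < q ^ 2" unfolding eventually_sequentially by blast
  define s where "s i = r i / q ^ 2" for i
  have q2: "q ^ 2 > 0" using assms by simp
  have s0: "0 \<le> s i" for i using assms q2 unfolding s_def r_def by (intro divide_nonneg_pos mult_nonneg_nonneg) auto
  have s1: "s i \<le> 1" if "i \<ge> i0" for i using i0[OF that] q2 unfolding s_def by simp
  define B where "B = (\<Prod>i<i0. max 1 (s i))"
  have Bpos: "B > 0" unfolding B_def by (intro prod_pos) auto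
  have "(\<Prod>i<p. (2*a + 2 * real i) * (2*b + 2 * real i)) \<le> B * fact (2 * p) * q ^ (2 * p)" for p
  proof -
    have "(\<Prod>i<p. (2*a + 2 * real i) * (2*b + 2 * real i)) = (\<Prod>i<p. s i * q ^ 2 * ((2 * real i + 1) * (2 * real i + 2)))"
      using q2 by (intro prod.cong refl) (simp add: s_def r_def)
    also have "\<dots> = (\<Prod>i<p. s i) * q ^ (2 * p) * fact (2 * p)"
      by (simp add: prod.distrib fact_double power_mult)
    also have "\<dots> \<le> B * q ^ (2 * p) * fact (2 * p)"
      unfolding B_def using assms by (intro mult_right_mono prod_bound_eventually s0 s1) auto
    finally show ?thesis by (simp add: algebra_simps)
  qed
  then show ?thesis using Bpos by blast
qed



lemma cc_abs_bound:
  "\<bar>\<Prod>i<p. (2*\<alpha> - 2 * real i) * (2*\<alpha> - 2 * real i - 2 + real d + 2 * real k)\<bar>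
   \<le> (\<Prod>i<p. (2*\<bar>\<alpha>\<bar> + 2 * real i) * (2*\<bar>\<alpha> - 1 + real d / 2 + real k\<bar> + 2 * real i))"
proof -
  have "\<bar>(2*\<alpha> - 2 * real i) * (2*\<alpha> - 2 * real i - 2 + real d + 2 * real k)\<bar>
      \<le> (2*\<bar>\<alpha>\<bar> + 2 * real i) * (2*\<bar>\<alpha> - 1 + real d / 2 + real k\<bar> + 2 * real i)" for i
  proof -
    have "\<bar>2*\<alpha> - 2 * real i\<bar> \<le> 2*\<bar>\<alpha>\<bar> + 2 * real i" by linarith
    moreover have "\<bar>2*\<alpha> - 2 * real i - 2 + real d + 2 * real k\<bar> \<le> 2*\<bar>\<alpha> - 1 + real d / 2 + real k\<bar> + 2 * real i"
    proof -
      have e: "2*\<alpha> - 2 * real i - 2 + real d + 2 * real k = 2 * (\<alpha> - 1 + real d / 2 + real k) - 2 * real i"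
        by simp
      have "\<bar>2 * (\<alpha> - 1 + real d / 2 + real k) - 2 * real i\<bar> \<le> \<bar>2 * (\<alpha> - 1 + real d / 2 + real k)\<bar> + \<bar>2 * real i\<bar>"
        by (rule abs_triangle_ineq4)
      then show ?thesis unfolding e using abs_mult[of "2::real" "\<alpha> - 1 + real d / 2 + real k"] by linarith
    qed
    ultimately show ?thesis by (simp add: abs_mult mult_mono)
  qed
  then show ?thesis unfolding abs_prod by (intro prod_mono) auto
qed

theorem mainTheorem2:
  fixes Y :: "real^'n::finite \<Rightarrow> real" and k :: nat and \<alpha> :: real
  assumes "CARD('n) \<ge> 2"
    and "harmonic_homogeneous_poly k Y"
  defines "H \<equiv> (\<lambda>x. complex_of_real (norm x powr (2 * \<alpha>) * Y x))"
  shows "((\<alpha> \<in> \<nat> \<or> (\<exists>j::nat. \<alpha> = 1 - real CARD('n) / 2 - real k + real j))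
            \<longrightarrow> polyharmonic_finite_order (- {0}) H)
       \<and> (\<not> (\<alpha> \<in> \<nat> \<or> (\<exists>j::nat. \<alpha> = 1 - real CARD('n) / 2 - real k + real j))
            \<longrightarrow> (\<forall>r0 r1. 0 < r0 \<and> ereal r0 < r1 \<longrightarrow>
                  polyharmonic_infinite_order_type (annulus r0 r1) (1 / r0) H))"
proof -
  note hY = assms(2)
  have hp: "homogeneous_poly k Y" using hY by (simp add: harmonic_homogeneous_poly_def)
  define cc where "cc p = (\<Prod>i<p. (2*\<alpha> - 2 * real i) * (2*\<alpha> - 2 * real i - 2 + real CARD('n) + 2 * real k))" for p
  have iter: "\<And>x p. x \<noteq> 0 \<Longrightarrow> (laplacian ^^ p) H x = complex_of_real (cc p * norm x powr (2 * \<alpha> - 2 * real p) * Y x)"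
    unfolding H_def cc_def by (rule iter_formula[OF hY])
  have part1: "polyharmonic_finite_order (- {0}) H"
    if hyp: "\<alpha> \<in> \<nat> \<or> (\<exists>j::nat. \<alpha> = 1 - real CARD('n) / 2 - real k + real j)"
  proof -
    have "\<exists>p. cc p = 0"
    proof (cases "\<alpha> \<in> \<nat>")
      case True
      then obtain n where n: "\<alpha> = real n" using Nats_cases by blast
      have "cc (Suc n) = 0" unfolding cc_def
        by (rule prod_zero) (auto intro!: bexI[of _ n] simp: n)
      then show ?thesis by blast
    next
      case False
      then obtain j :: nat where j: "\<alpha> = 1 - real CARD('n) / 2 - real k + real j" using hyp by blast
      have "cc (Suc j) = 0" unfolding cc_def
        by (rule prod_zero) (auto intro!: bexI[of _ j] simp: j algebra_simps)
      then show ?thesis by blast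
    qed
    then obtain p where "cc p = 0" by blast
    then show ?thesis unfolding polyharmonic_finite_order_def using iter by auto
  qed
  have part2: "polyharmonic_infinite_order_type (annulus r0 r1) (1 / r0) H"
    if r: "0 < r0" "ereal r0 < r1" for r0 :: real and r1 :: ereal
  proof -
    have sub: "annulus r0 r1 \<subseteq> (- {0} :: (real^'n) set)"
      using r by (auto simp: annulus_def)
    have "Ck_on m (- {0}) H" for m
    proof -
      have "Ck_on m (- {0}) (\<lambda>y::real^'n. 1 * norm y powr (2 * \<alpha>) * Y y)" by (rule Ck_F[OF hp])
      then have "Ck_on m (- {0}) (\<lambda>y::real^'n. norm y powr (2 * \<alpha>) * Y y)" by simp
      from Ck_of_real[OF _ this] show ?thesis unfolding H_def by auto
    qed
    then have smooth: "smooth_on (annulus r0 r1) H"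
      unfolding smooth_on_def using Ck_subset sub by blast
    have bound: "\<exists>C>0. \<forall>p::nat. \<forall>x\<in>K. norm ((laplacian ^^ p) H x) \<le> C * fact (2*p) * (1 / r0 + \<epsilon>) ^ (2*p)"
      if K: "compact K" "K \<subseteq> annulus r0 r1" "\<epsilon> > 0" for K \<epsilon>
    proof (cases "K = {}")
      case True then show ?thesis by (intro exI[of _ 1]) auto
    next
      case False
      have Kn0: "x \<noteq> 0" "r0 < norm x" if "x \<in> K" for x
        using K(2) that r(1) by (auto simp: annulus_def)
      obtain x0 where x0: "x0 \<in> K" "\<And>y. y \<in> K \<Longrightarrow> norm x0 \<le> norm y"
        using continuous_attains_inf[OF K(1) False continuous_on_norm_id] by blast
      define \<rho> where "\<rho> = norm x0"
      have \<rho>: "r0 < \<rho>" using Kn0(2)[OF x0(1)] by (simp add: \<rho>_def)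
      have Ycont: "continuous_on UNIV Y" using Ck_homog[OF hp, of 0] by simp
      have "continuous_on K (\<lambda>x. \<bar>norm x powr (2 * \<alpha>) * Y x\<bar>)"
        using Kn0(1) continuous_on_subset[OF Ycont]
        by (intro continuous_intros) auto
      then obtain x1 where x1: "x1 \<in> K" "\<And>y. y \<in> K \<Longrightarrow> \<bar>norm y powr (2 * \<alpha>) * Y y\<bar> \<le> \<bar>norm x1 powr (2 * \<alpha>) * Y x1\<bar>"
        using continuous_attains_sup[OF K(1) False] by blast
      define M where "M = \<bar>norm x1 powr (2 * \<alpha>) * Y x1\<bar>"
      define q where "q = \<rho> * (1 / r0 + \<epsilon>)"
      have "\<rho> * (1 / r0) > 1" using \<rho> r(1) by (simp add: field_simps)
      moreover have "\<rho> * \<epsilon> > 0" using \<rho> r(1) K(3) by simp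
      ultimately have q1: "q > 1" unfolding q_def by (simp add: distrib_left)
      obtain B where B: "B > 0" "\<And>p. (\<Prod>i<p. (2*\<bar>\<alpha>\<bar> + 2 * real i) * (2*\<bar>\<alpha> - 1 + real CARD('n) / 2 + real k\<bar> + 2 * real i))
            \<le> B * fact (2 * p) * q ^ (2 * p)"
        using growth[OF abs_ge_zero abs_ge_zero q1] by blast
      have ccb: "\<bar>cc p\<bar> \<le> B * fact (2 * p) * q ^ (2 * p)" for p
        using cc_abs_bound[where p=p and \<alpha>=\<alpha> and d="CARD('n)" and k=k] B(2)[of p] unfolding cc_def by linarith
      have "norm ((laplacian ^^ p) H x) \<le> (B * (M + 1)) * fact (2*p) * (1 / r0 + \<epsilon>) ^ (2*p)"
        if x: "x \<in> K" for p x
      proof -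
        have nx: "norm x > 0" using Kn0(1)[OF x] by simp
        have \<rho>0: "\<rho> > 0" using \<rho> r(1) by simp
        have "norm ((laplacian ^^ p) H x) = \<bar>cc p\<bar> * (\<bar>norm x powr (2 * \<alpha>) * Y x\<bar> / norm x ^ (2 * p))"
        proof -
          have "norm x powr (2 * \<alpha> - 2 * real p) = norm x powr (2 * \<alpha>) / norm x ^ (2 * p)"
            using nx powr_realpow[OF nx, of "2 * p"] by (simp add: powr_diff)
          then show ?thesis using iter[OF Kn0(1)[OF x], of p] nx
            by (simp add: abs_mult norm_mult norm_divide norm_power)
        qed
        also have "\<dots> \<le> \<bar>cc p\<bar> * (M / \<rho> ^ (2 * p))"
        proof (intro mult_left_mono frac_le)
          show "\<bar>norm x powr (2 * \<alpha>) * Y x\<bar> \<le> M" using x1(2)[OF x] by (simp add: M_def)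
          show "\<rho> ^ (2 * p) \<le> norm x ^ (2 * p)" using x0(2)[OF x] \<rho>0 by (intro power_mono) (auto simp: \<rho>_def)
        qed (use \<rho>0 in \<open>auto simp: M_def\<close>)
        also have "\<dots> \<le> (B * fact (2 * p) * q ^ (2 * p)) * (M / \<rho> ^ (2 * p))"
          using ccb[of p] \<rho>0 by (intro mult_right_mono) (auto simp: M_def)
        also have "\<dots> = B * M * fact (2 * p) * (1 / r0 + \<epsilon>) ^ (2 * p)"
        proof -
          have "q ^ (2 * p) = \<rho> ^ (2 * p) * (1 / r0 + \<epsilon>) ^ (2 * p)"
            unfolding q_def by (rule power_mult_distrib)
          then show ?thesis using \<rho>0 by simp
        qed
        also have "\<dots> \<le> B * (M + 1) * fact (2 * p) * (1 / r0 + \<epsilon>) ^ (2 * p)"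
          using B(1) r(1) K(3) by (intro mult_right_mono) auto
        finally show ?thesis .
      qed
      moreover have "B * (M + 1) > 0" using B(1) by (simp add: M_def add_nonneg_pos)
      ultimately show ?thesis by blast
    qed
    show ?thesis unfolding polyharmonic_infinite_order_type_def using smooth bound by blast
  qed
  show ?thesis using part1 part2 by blast
qed


end
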